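(* Let $n$ be a positive integer and let $L$ and $R$ be the matrices indexed by $P(n)$ defined in the context. Let $x=(x_{(d,c)})_{(d,c)\in P(n)}$ be a column vector such that $x_{(d,c)}=x_{(1,c)}$ for all $(d,c)\in P(n)$. Then $Lx=Rx$.
   Context: Let $\phi$ denote Euler's totient function. For a positive integer $n$ let $P(n)=\{(i,j): j\mid n,\ i\mid j\}$. Define square matrices $L$ and $R$ with rows and columns indexed by $P(n)$ as follows. For a row index $(i,j)$ and a column index $(d,c)$: $L_{(i,j)}^{(d,c)} = \phi(d)\,\frac{n}{\operatorname{lcm}(j,c)}$ if $d\mid i$ and $j\mid \operatorname{lcm}(i,c)$, and $L_{(i,j)}^{(d,c)}=0$ otherwise. For the row $(i,j)$, let $v$ be the largest divisor of $i$ coprime with $j/i$ and put $u=i/v$. Then $R_{(i,j)}^{(e,c)} = u\,\phi(ev/j)\,\frac{n}{\operatorname{lcm}(j,c)}$ if $(j/v)\mid e$, $e\mid j$ and $j\mid\operatorname{lcm}(i,c)$, and $R_{(i,j)}^{(e,c)}=0$ otherwise. (Equivalently, with variables $N_d^c$, $(d,c)\in P(n)$, row $(i,j)$ of $L$ gives the coefficients of $\sum_{d\mid i}\phi(d)\sum_{c\mid n,\ d\mid c,\ j\mid\operatorname{lcm}(i,c)}\frac{n}{\operatorname{lcm}(j,c)}N_d^c$, and row $(i,j)$ of $R$ gives the coefficients of $\sum_{d\mid v}u\phi(d)\sum_{c\mid n,\ d\mid c,\ j\mid \operatorname{lcm}(i,c)}\frac{n}{\operatorname{lcm}(j,c)}N_{jd/v}^c$.)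 *)

theory Defs
  imports "HOL-Number_Theory.Number_Theory"
begin

definition Pset :: "nat \<Rightarrow> (nat \<times> nat) set" where
  "Pset n = {(i, j). j dvd n \<and> i dvd j}"

definition Lmat :: "nat \<Rightarrow> nat \<times> nat \<Rightarrow> nat \<times> nat \<Rightarrow> nat" where
  "Lmat n = (\<lambda>(i, j) (d, c).
     if d dvd i \<and> j dvd lcm i c then totient d * (n div lcm j c) else 0)"

definition vpart :: "nat \<Rightarrow> nat \<Rightarrow> nat" where
  "vpart i j = Max {v. v dvd i \<and> coprime v (j div i)}"

definition upart :: "nat \<Rightarrow> nat \<Rightarrow> nat" where
  "upart i j = i div vpart i j"

text \<open>Matrix R: row (i,j), column (e,c). Here e*v/j is an exact quotient since (j/v) | e.\<close>
definition Rmat :: "nat \<Rightarrow> nat \<times> nat \<Rightarrow> nat \<times> nat \<Rightarrow> nat" where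
  "Rmat n = (\<lambda>(i, j) (e, c).
     (let v = vpart i j; u = upart i j in
      if (j div v) dvd e \<and> e dvd j \<and> j dvd lcm i c
      then u * totient (e * v div j) * (n div lcm j c) else 0))"

definition matvec :: "nat \<Rightarrow> (nat \<times> nat \<Rightarrow> nat \<times> nat \<Rightarrow> nat)
    \<Rightarrow> (nat \<times> nat \<Rightarrow> 'a::comm_ring_1) \<Rightarrow> nat \<times> nat \<Rightarrow> 'a" where
  "matvec n M x = (\<lambda>r. \<Sum>k\<in>Pset n. of_nat (M r k) * x k)"

end

theory Submission
  imports Defs
begin

lemma vpart_facts:
  fixes i k :: nat assumes "i > 0"
  defines "S \<equiv> {v. v dvd i \<and> coprime v k}"
  shows "Max S dvd i" "coprime (Max S) k" "Max S > 0"
    "\<And>p. prime p \<Longrightarrow> p dvd (i div Max S) \<Longrightarrow> p dvd k"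
proof -
  have fin: "finite S" unfolding S_def using assms(1)
    by (metis (no_types, lifting) finite_divisors_nat mem_Collect_eq rev_finite_subset subsetI)
  have ne: "1 \<in> S" unfolding S_def by simp
  have mem: "Max S \<in> S" using fin ne Max_in by blast
  then show "Max S dvd i" "coprime (Max S) k" unfolding S_def by auto
  then show pos: "Max S > 0" using assms(1) by (metis dvd_0_left_iff gr0I)
  fix p :: nat assume p: "prime p" "p dvd (i div Max S)"
  show "p dvd k"
  proof (rule ccontr)
    assume "\<not> p dvd k"
    then have "coprime p k" using p(1) prime_imp_coprime by blast
    then have "coprime (p * Max S) k" using \<open>coprime (Max S) k\<close> by simp
    moreover have "p * Max S dvd i"
      using p(2) \<open>Max S dvd i\<close> by (metis dvd_mult_div_cancel mult_dvd_mono dvd_refl mult.commute)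
    ultimately have "p * Max S \<in> S" unfolding S_def by simp
    then have "p * Max S \<le> Max S" using fin by simp
    moreover have "p \<ge> 2" using p(1) prime_ge_2_nat by blast
    moreover have "2 * Max S \<le> p * Max S" using \<open>p \<ge> 2\<close> by (rule mult_right_mono) simp
    ultimately show False using pos by linarith
  qed
qed

lemma key:
  fixes n i j c :: nat assumes "n > 0" "j dvd n" "i dvd j" "c dvd n"
  shows "(\<Sum>d | d dvd c. Lmat n (i,j) (d,c)) = (\<Sum>e | e dvd c. Rmat n (i,j) (e,c))"
proof -
  have jpos: "j > 0" using assms by (metis dvd_0_left_iff gr0I not_less0)
  have ipos: "i > 0" using jpos assms(3) by (metis dvd_0_left_iff gr0I)
  have cpos: "c > 0" using assms(1,4) by (metis dvd_0_left_iff gr0I not_less0)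
  obtain k where jk: "j = i * k" using assms(3) by (auto elim: dvdE)
  have kpos: "k > 0" using jk jpos by (metis gr0I mult_0_right)
  have kdef: "j div i = k" using jk ipos by simp
  define v where "v = vpart i j"
  define u where "u = upart i j"
  have vS: "v = Max {v. v dvd i \<and> coprime v k}" unfolding v_def vpart_def kdef ..
  have vdvd: "v dvd i" and vcop: "coprime v k" and vpos: "v > 0"
    using vpart_facts(1-3)[OF ipos, of k] unfolding vS[symmetric] by auto
  have up: "p dvd k" if "prime p" "p dvd u" for p
    using vpart_facts(4)[OF ipos that(1), of k] that(2) unfolding vS[symmetric] u_def upart_def v_def[symmetric] by auto
  have iuv: "i = u * v" unfolding u_def upart_def v_def[symmetric] using vdvd by simp
  have upos: "u > 0" using iuv ipos by (metis gr0I mult_0)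
  define N where "N = n div lcm j c"
  show ?thesis
  proof (cases "j dvd lcm i c")
    case False
    then show ?thesis by (simp add: Lmat_def Rmat_def Let_def)
  next
    case True
    have finc: "finite {d. d dvd c}" using cpos by simp
    have "(\<Sum>d | d dvd c. Lmat n (i,j) (d,c)) = (\<Sum>d | d dvd gcd i c. totient d * N)"
    proof (rule sum.mono_neutral_cong_right[OF finc])
      show "{d. d dvd gcd i c} \<subseteq> {d. d dvd c}" by auto
      show "\<forall>x\<in>{d. d dvd c} - {d. d dvd gcd i c}. Lmat n (i, j) (x, c) = 0"
        by (auto simp: Lmat_def)
      show "\<And>x. x \<in> {d. d dvd gcd i c} \<Longrightarrow> Lmat n (i, j) (x, c) = totient x * N"
        using True by (auto simp: Lmat_def N_def)
    qed
    also have "\<dots> = (\<Sum>d | d dvd gcd i c. totient d) * N" by (simp only: sum_distrib_right)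
    also have "\<dots> = gcd i c * N" by (simp only: totient_divisor_sum)
    finally have L: "(\<Sum>d | d dvd c. Lmat n (i,j) (d,c)) = gcd i c * N" .
    define w where "w = u * k"
    have jvw: "j = v * w" unfolding w_def using jk iuv by simp
    have wpos: "w > 0" unfolding w_def using upos kpos by simp
    have jdv: "j div v = w" using jvw vpos by simp
    have "lcm i c dvd v * lcm u c" unfolding iuv
      by (intro lcm_least) (auto intro: mult_dvd_mono dvd_mult)
    then have "v * w dvd v * lcm u c" using True jvw by (metis dvd_trans)
    then have wl: "w dvd lcm u c" using vpos by simp
    define g where "g = gcd u c"
    have gpos: "g > 0" unfolding g_def using upos by simp
    have "g * lcm u c = u * c" unfolding g_def using gcd_mult_lcm[of u c] by simp
    moreover have "w * g dvd lcm u c * g" using wl by (rule mult_dvd_mono) simp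
    ultimately have "u * (k * g) dvd u * c" unfolding w_def by (simp add: mult.commute mult.left_commute)
    then have kg: "k * g dvd c" using upos by simp
    obtain u1 c1 where uc: "u = u1 * g" "c = c1 * g" "coprime u1 c1"
    proof -
      from gcd_coprime_exists[of u c] gpos obtain a b where "u = a * g" "c = b * g" "coprime a b"
        unfolding g_def by blast
      then show ?thesis using that by blast
    qed
    have "k * g dvd c1 * g" using kg uc(2) by simp
    then have "k dvd c1" using gpos by simp
    have "u1 = 1"
    proof (rule ccontr)
      assume "u1 \<noteq> 1"
      then obtain p :: nat where p: "prime p" "p dvd u1" using prime_factor_nat by blast
      then have "p dvd k" using up uc(1) by simp
      then have "p dvd c1" using \<open>k dvd c1\<close> by (rule dvd_trans)
      then show False using p uc(3) by (meson coprime_common_divisor not_prime_unit)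
    qed
    then have "w dvd c" using kg uc(1) unfolding w_def by (simp add: mult.commute)
    then obtain c2 where c2: "c = w * c2" by (auto elim: dvdE)
    have G: "gcd i c = u * gcd v c2"
    proof -
      have "gcd i c = gcd (u * v) (u * (k * c2))" using iuv c2 unfolding w_def by (simp add: mult.assoc)
      also have "\<dots> = u * gcd v (k * c2)" by (simp add: gcd_mult_distrib_nat)
      also have "\<dots> = u * gcd v c2" using vcop by (simp add: gcd_mult_right_left_cancel)
      finally show ?thesis .
    qed
    have "(\<Sum>e | e dvd c. Rmat n (i,j) (e,c)) = (\<Sum>e \<in> (\<lambda>f. w * f) ` {f. f dvd gcd v c2}. u * totient (e * v div j) * N)"
    proof (rule sum.mono_neutral_cong_right[OF finc])
      show "(\<lambda>f. w * f) ` {f. f dvd gcd v c2} \<subseteq> {d. d dvd c}" using c2 by auto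
      show "\<forall>x\<in>{d. d dvd c} - (\<lambda>f. w * f) ` {f. f dvd gcd v c2}. Rmat n (i, j) (x, c) = 0"
      proof
        fix e assume e: "e \<in> {d. d dvd c} - (\<lambda>f. w * f) ` {f. f dvd gcd v c2}"
        show "Rmat n (i, j) (e, c) = 0"
        proof (rule ccontr)
          assume "Rmat n (i, j) (e, c) \<noteq> 0"
          then have "w dvd e" "e dvd j" by (auto simp: Rmat_def Let_def v_def[symmetric] jdv split: if_splits)
          then obtain f where f: "e = w * f" by (auto elim: dvdE)
          have "f dvd v" using \<open>e dvd j\<close> f jvw wpos by (simp add: mult.commute)
          moreover have "f dvd c2" using e f c2 wpos by auto
          ultimately show False using e f by auto
        qed
      qed
      show "\<And>x. x \<in> (\<lambda>f. w * f) ` {f. f dvd gcd v c2} \<Longrightarrow> Rmat n (i, j) (x, c) = u * totient (x * v div j) * N"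
      proof -
        fix e assume "e \<in> (\<lambda>f. w * f) ` {f. f dvd gcd v c2}"
        then obtain f where f: "e = w * f" "f dvd v" by auto
        have "e dvd j" using f jvw by (simp add: mult.commute)
        then show "Rmat n (i, j) (e, c) = u * totient (e * v div j) * N"
          using True f by (auto simp: Rmat_def Let_def v_def[symmetric] u_def[symmetric] jdv N_def)
      qed
    qed
    also have "\<dots> = (\<Sum>f | f dvd gcd v c2. u * totient (w * f * v div j) * N)"
      using wpos by (subst sum.reindex) (auto simp: inj_on_def)
    also have "\<dots> = (\<Sum>f | f dvd gcd v c2. u * totient f * N)"
      by (intro sum.cong refl) (simp add: jvw vpos wpos mult.commute mult.left_commute)
    also have "\<dots> = u * (\<Sum>f | f dvd gcd v c2. totient f) * N"
      by (simp only: sum_distrib_right sum_distrib_left)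
    also have "\<dots> = u * gcd v c2 * N" by (simp only: totient_divisor_sum)
    finally show ?thesis using L G by simp
  qed
qed

lemma Pset_sum:
  fixes f :: "nat \<times> nat \<Rightarrow> 'a::comm_monoid_add" assumes "n > 0"
  shows "(\<Sum>k\<in>Pset n. f k) = (\<Sum>c | c dvd n. \<Sum>d | d dvd c. f (d, c))"
proof -
  have eq: "Pset n = (\<lambda>(c, d). (d, c)) ` (SIGMA c:{c. c dvd n}. {d. d dvd c})"
    unfolding Pset_def by auto
  have inj: "inj_on (\<lambda>(c, d). (d, c)) (SIGMA c:{c. c dvd n}. {d. d dvd c})"
    by (auto simp: inj_on_def)
  have fin1: "finite {c. c dvd n}" using assms by simp
  have fin2: "\<forall>c\<in>{c. c dvd n}. finite {d. d dvd c}"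
    using assms by (auto intro!: finite_divisors_nat dest: dvd_0_left) 
  show ?thesis unfolding eq sum.reindex[OF inj]
    using sum.Sigma[OF fin1 fin2, of "\<lambda>c d. f (d, c)"] by (simp add: case_prod_unfold)
qed

theorem proposition3p2:
  fixes n :: nat and x :: "nat \<times> nat \<Rightarrow> 'a::comm_ring_1"
  assumes "n > 0"
    and "\<forall>(d, c) \<in> Pset n. x (d, c) = x (1, c)"
  shows "\<forall>r \<in> Pset n. matvec n (Lmat n) x r = matvec n (Rmat n) x r"
proof
  fix r assume "r \<in> Pset n"
  then obtain i j where r: "r = (i, j)" "j dvd n" "i dvd j" unfolding Pset_def by auto
  have red: "matvec n M x r = (\<Sum>c | c dvd n. of_nat (\<Sum>d | d dvd c. M r (d, c)) * x (1, c))" for M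
  proof -
    have "matvec n M x r = (\<Sum>c | c dvd n. \<Sum>d | d dvd c. of_nat (M r (d, c)) * x (d, c))"
      unfolding matvec_def by (rule Pset_sum[OF assms(1)])
    also have "\<dots> = (\<Sum>c | c dvd n. \<Sum>d | d dvd c. of_nat (M r (d, c)) * x (1, c))"
    proof (intro sum.cong refl)
      fix c d assume "c \<in> {c. c dvd n}" "d \<in> {d. d dvd c}"
      then have "(d, c) \<in> Pset n" unfolding Pset_def by simp
      then have "x (d, c) = x (1, c)" using assms(2) by blast
      then show "of_nat (M r (d, c)) * x (d, c) = of_nat (M r (d, c)) * x (1, c)" by simp
    qed
    also have "\<dots> = (\<Sum>c | c dvd n. of_nat (\<Sum>d | d dvd c. M r (d, c)) * x (1, c))"
      by (simp only: of_nat_sum sum_distrib_right)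
    finally show ?thesis .
  qed
  show "matvec n (Lmat n) x r = matvec n (Rmat n) x r"
    unfolding red unfolding r(1)
  proof (rule sum.cong[OF refl])
    fix c assume "c \<in> {c. c dvd n}"
    then have "(\<Sum>d | d dvd c. Lmat n (i, j) (d, c)) = (\<Sum>d | d dvd c. Rmat n (i, j) (d, c))"
      using key[OF assms(1) r(2,3)] by blast
    then show "of_nat (\<Sum>d | d dvd c. Lmat n (i, j) (d, c)) * x (1, c) = of_nat (\<Sum>d | d dvd c. Rmat n (i, j) (d, c)) * x (1, c)"
      by (rule arg_cong)
  qed
qed

end
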